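(* There is a universal constant $c>0$ such that for every continuous distribution function $F$ and all integers $K\ge 1$, $N\ge 2(K+1)$, $$\mathbb P\Big(\min_{1\le l\le K+1} a_l\ \ge\ 1-\tfrac1K\Big)\ \ge\ cK^{-3},\qquad\text{where } a_l:=F^{(K+1)}\Big(\sum_{i=l}^{l+K}Y_i\Big).$$
   Context: Let $F$ be a continuous distribution function on $\mathbb R$ and $Y_1,\dots,Y_N$ i.i.d. with law $F$ (indices modulo $N$). $F^{(K+1)}$ denotes the distribution function of the sum of $K+1$ independent random variables with law $F$. *)

theory Defs
  imports "HOL-Probability.Probability"
begin

text \<open>Distribution function of the sum of m independent random variables with law mu,
  i.e. the m-fold convolution power of the distribution function of mu.\<close>
definition conv_pow_cdf :: "real measure \<Rightarrow> nat \<Rightarrow> real \<Rightarrow> real" where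
  "conv_pow_cdf \<mu> m x =
     measure (PiM {..<m} (\<lambda>_. \<mu>))
       {\<omega> \<in> space (PiM {..<m} (\<lambda>_. \<mu>)). (\<Sum>i<m. \<omega> i) \<le> x}"

end

theory Submission
  imports Defs "HOL-Probability.Probability"
begin


lemma (in real_distribution) cdf_lt_bound:
  assumes t0: "0 \<le> t"
  shows "measure M {y. cdf M y < t} \<le> t"
proof -
  define U where "U = {y. cdf M y < t}"
  have dc: "x \<in> U" if "y \<in> U" "x \<le> y" for x y
    using that cdf_nondecreasing[of x y] by (auto simp: U_def)
  have Usets: "U \<in> sets M"
  proof -
    have "mono (cdf M)" by (auto intro: monoI cdf_nondecreasing)
    then have "cdf M \<in> borel_measurable borel" by (rule borel_measurable_mono)
    then show ?thesis unfolding U_def by (simp add: events_eq_borel)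
  qed
  show ?thesis
  proof (cases "U = {}")
    case True then show ?thesis using t0 by (simp add: U_def[symmetric])
  next
    case ne: False
    show ?thesis
    proof (cases "bdd_above U")
      case False
      have "U = UNIV"
      proof safe
        fix x
        from False obtain u where "u \<in> U" "x \<le> u" unfolding bdd_above_def
          by (meson linorder_not_le order.strict_implies_order)
        then show "x \<in> U" using dc by blast
      qed simp
      then have "\<forall>y. cdf M y < t" by (auto simp: U_def)
      then have "1 \<le> t"
        using cdf_lim_at_top_prob by (intro tendsto_upperbound[where F=at_top]) (auto intro: less_imp_le always_eventually)
      then show ?thesis using prob_le_1 by (metis U_def order_trans)
    next
      case bdd: True
      define x0 where "x0 = Sup U"
      have ub: "u \<le> x0" if "u \<in> U" for u using bdd that by (simp add: x0_def cSup_upper)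
      show ?thesis
      proof (cases "x0 \<in> U")
        case True
        have "measure M U \<le> measure M {..x0}"
          using ub by (intro finite_measure_mono) auto
        also have "\<dots> = cdf M x0" by (simp add: cdf_def)
        also have "\<dots> < t" using True by (simp add: U_def)
        finally show ?thesis by (simp add: U_def)
      next
        case False
        define V where "V n = {..x0 - 1 / Suc n}" for n :: nat
        have UV: "U = (\<Union>n. V n)"
        proof safe
          fix u assume "u \<in> U"
          then have "u < x0" using ub False by (metis order.not_eq_order_implies_strict)
          then obtain n where "1 / Suc n < x0 - u"
            by (metis diff_gt_0_iff_gt nat_approx_posE)
          then have "u \<in> V n" by (simp add: V_def)
          then show "u \<in> (\<Union>n. V n)" by blast
        next
          fix u n assume "u \<in> V n"
          then have "u < x0" by (auto simp: V_def) (smt (verit) of_nat_0_le_iff divide_pos_pos)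
          then obtain v where "v \<in> U" "u < v" using less_cSupE[of u U] ne by (auto simp: x0_def)
          then show "u \<in> U" using dc by auto
        qed
        have le: "measure M (V n) \<le> t" for n
        proof -
          have "x0 - 1 / Suc n < x0" by simp
          then obtain v where "v \<in> U" "x0 - 1 / Suc n < v" using less_cSupE[of "x0 - 1 / Suc n" U] ne unfolding x0_def by blast
          then have "measure M (V n) \<le> measure M {..v}"
            by (intro finite_measure_mono) (auto simp: V_def)
          also have "\<dots> < t" using \<open>v \<in> U\<close> by (simp add: U_def cdf_def)
          finally show ?thesis by simp
        qed
        have "incseq V"
          unfolding V_def by (intro monoI) (auto simp: frac_le)
        then have "(\<lambda>n. measure M (V n)) \<longlonglongrightarrow> measure M (\<Union>n. V n)"
          by (intro finite_Lim_measure_incseq[OF _ \<open>incseq V\<close>]) (auto simp: V_def)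
        then have "measure M (\<Union>n. V n) \<le> t" using le by (intro LIMSEQ_le_const2) auto
        then show ?thesis using UV by (simp add: U_def)
      qed
    qed
  qed
qed




lemma per_sum:
  fixes h :: "nat \<Rightarrow> real"
  assumes "\<And>j. h (j + K) = h j"
  shows "(\<Sum>j<n+K. h j) = (\<Sum>j<n. h j) + (\<Sum>j<K. h j)"
  by (induction n) (simp_all add: assms add.commute)

lemma per_sum_mult:
  fixes h :: "nat \<Rightarrow> real"
  assumes "\<And>j. h (j + K) = h j"
  shows "(\<Sum>j<a + q*K. h j) = (\<Sum>j<a. h j) + real q * (\<Sum>j<K. h j)"
proof (induction q)
  case (Suc q)
  have "(\<Sum>j<a + Suc q*K. h j) = (\<Sum>j<(a + q*K) + K. h j)" by (simp add: algebra_simps)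
  also have "\<dots> = (\<Sum>j<a + q*K. h j) + (\<Sum>j<K. h j)" by (rule per_sum[of h K, OF assms])
  finally show ?case using Suc by (simp add: algebra_simps)
qed simp

lemma shift_sum:
  fixes h :: "nat \<Rightarrow> real"
  shows "(\<Sum>j<m. h (j + r)) = (\<Sum>j<m+r. h j) - (\<Sum>j<r. h j)"
  by (induction m) (simp_all add: add.commute)

lemma rot_sum:
  fixes g :: "nat \<Rightarrow> real"
  assumes "0 < K"
  shows "(\<Sum>j<K. g ((j + r) mod K)) = (\<Sum>j<K. g j)"
proof -
  define h where "h j = g (j mod K)" for j
  have per: "h (j + K) = h j" for j by (simp add: h_def)
  have "(\<Sum>j<K. g ((j + r) mod K)) = (\<Sum>j<K. h (j + r))" by (simp add: h_def)
  also have "\<dots> = (\<Sum>j<K + r. h j) - (\<Sum>j<r. h j)" by (rule shift_sum)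
  also have "\<dots> = (\<Sum>j<K. h j)" using per_sum[of h K r, OF per] by (simp add: add.commute)
  also have "\<dots> = (\<Sum>j<K. g j)" by (simp add: h_def)
  finally show ?thesis .
qed

lemma cycle_lemma:
  fixes d :: "nat \<Rightarrow> real"
  assumes K: "0 < K"
  shows "\<exists>r<K. \<forall>m\<le>K. real m / real K * (\<Sum>j<K. d j) \<le> (\<Sum>j<m. d ((j + r) mod K))"
proof -
  define s where "s = (\<Sum>j<K. d j)"
  define e where "e j = d (j mod K) - s / K" for j
  define Q where "Q n = (\<Sum>j<n. e j)" for n
  have per: "e (j + K) = e j" for j by (simp add: e_def)
  have QK: "Q K = 0" using K by (simp add: Q_def e_def sum_subtractf s_def)
  have Qmod: "Q n = Q (n mod K)" for n
  proof -
    have "n = n mod K + (n div K) * K" by simp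
    then have "Q n = Q (n mod K + (n div K) * K)" by simp
    also have "\<dots> = Q (n mod K)" using per_sum_mult[of e K "n mod K" "n div K", OF per] QK
      by (simp add: Q_def)
    finally show ?thesis .
  qed
  have fin: "finite (Q ` {..<K})" "Q ` {..<K} \<noteq> {}" using K by auto
  obtain r where r: "r < K" "Q r = Min (Q ` {..<K})" using Min_in[OF fin] by auto
  have rmin: "Q r \<le> Q n" for n
    using Qmod[of n] r K by (simp add: Min_le)
  show ?thesis
  proof (intro exI[of _ r] conjI allI impI r(1))
    fix m assume "m \<le> K"
    have "(\<Sum>j<m. e (j + r)) = Q (m + r) - Q r" by (simp add: Q_def shift_sum)
    then have "0 \<le> (\<Sum>j<m. e (j + r))" using rmin[of "m+r"] by simp
    also have "(\<Sum>j<m. e (j + r)) = (\<Sum>j<m. d ((j + r) mod K)) - real m * (s / K)"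
      by (simp add: e_def sum_subtractf)
    finally show "real m / real K * (\<Sum>j<K. d j) \<le> (\<Sum>j<m. d ((j + r) mod K))"
      by (simp add: s_def)
  qed
qed




lemma comp_meas:
  assumes "sets \<mu> = sets borel" "i \<in> I"
  shows "(\<lambda>\<omega>. \<omega> i) \<in> borel_measurable (PiM I (\<lambda>_. \<mu>))"
  using measurable_component_singleton[OF assms(2), of "\<lambda>_. \<mu>"]
  by (simp add: measurable_cong_sets[OF refl assms(1)])

lemma conv_pow_cdf_mono:
  assumes "prob_space \<mu>" "sets \<mu> = sets borel" "x \<le> y"
  shows "conv_pow_cdf \<mu> m x \<le> conv_pow_cdf \<mu> m y"
proof -
  interpret P: prob_space "PiM {..<m} (\<lambda>_. \<mu>)" by (intro prob_space_PiM assms(1))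
  have "(\<lambda>\<omega>. \<Sum>i<m. \<omega> i) \<in> borel_measurable (PiM {..<m} (\<lambda>_. \<mu>))"
    by (intro borel_measurable_sum comp_meas[OF assms(2)]) auto
  then have "{\<omega> \<in> space (PiM {..<m} (\<lambda>_. \<mu>)). (\<Sum>i<m. \<omega> i) \<le> y} \<in> P.events"
    by measurable
  then show ?thesis unfolding conv_pow_cdf_def
    using assms(3) by (intro P.finite_measure_mono) auto
qed

lemma conv_pow_cdf_meas:
  assumes "prob_space \<mu>" "sets \<mu> = sets borel"
  shows "conv_pow_cdf \<mu> m \<in> borel_measurable borel"
  by (rule borel_measurable_mono) (auto intro: monoI conv_pow_cdf_mono[OF assms])

lemma window_sum:
  fixes \<omega> :: "nat \<Rightarrow> real"
  shows "(\<Sum>i=l..l+K. \<omega> i) = (\<Sum>i<K+1. \<omega> i) + (\<Sum>j<l. \<omega> (K+1+j) - \<omega> j)"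
proof (induction l)
  case 0 then show ?case by (simp add: atLeast0AtMost lessThan_Suc_atMost)
next
  case (Suc l)
  have "(\<Sum>i=l..l+K. \<omega> i) + \<omega> (Suc (l+K)) = (\<Sum>i=l..Suc (l+K). \<omega> i)"
    by (simp add: sum.cl_ivl_Suc)
  also have "\<dots> = \<omega> l + (\<Sum>i=Suc l..Suc l+K. \<omega> i)"
    by (simp add: sum.atLeast_Suc_atMost)
  finally show ?case using Suc by (simp add: algebra_simps)
qed




lemma reindex_meas:
  assumes "inj_on f I'" "f \<in> I' \<rightarrow> I"
  shows "(\<lambda>\<omega>. \<lambda>n\<in>I'. \<omega> (f n)) \<in> measurable (PiM I (\<lambda>_. \<mu>)) (PiM I' (\<lambda>_. \<mu>))"
  using assms by (intro measurable_restrict measurable_component_singleton) auto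

lemma reindex_prob:
  assumes "prob_space \<mu>" "inj_on f I'" "f \<in> I' \<rightarrow> I" "Q \<in> sets (PiM I' (\<lambda>_. \<mu>))"
  shows "measure (PiM I (\<lambda>_. \<mu>)) ((\<lambda>\<omega>. \<lambda>n\<in>I'. \<omega> (f n)) -` Q \<inter> space (PiM I (\<lambda>_. \<mu>)))
       = measure (PiM I' (\<lambda>_. \<mu>)) Q"
proof -
  have "distr (PiM I (\<lambda>_. \<mu>)) (PiM I' (\<lambda>_. \<mu>)) (\<lambda>\<omega>. \<lambda>n\<in>I'. \<omega> (f n)) = PiM I' (\<lambda>_. \<mu>)"
    using distr_PiM_reindex[of I "\<lambda>_. \<mu>" f I'] assms by simp
  then show ?thesis
    using measure_distr[OF reindex_meas[OF assms(2,3), of \<mu>] assms(4)] by simp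
qed

lemma indep_coords:
  assumes "prob_space \<mu>" "I \<noteq> {}"
  shows "prob_space.indep_vars (PiM I (\<lambda>_. \<mu>)) (\<lambda>_. \<mu>) (\<lambda>i \<omega>. \<omega> i) I"
proof -
  interpret P: prob_space "PiM I (\<lambda>_. \<mu>)" by (intro prob_space_PiM assms(1))
  have 1: "distr (PiM I (\<lambda>_. \<mu>)) (PiM I (\<lambda>_. \<mu>)) (\<lambda>x. \<lambda>i\<in>I. x i) = PiM I (\<lambda>_. \<mu>)"
    using distr_PiM_reindex[of I "\<lambda>_. \<mu>" "\<lambda>x. x" I] assms by simp
  have 2: "PiM I (\<lambda>i. distr (PiM I (\<lambda>_. \<mu>)) \<mu> (\<lambda>\<omega>. \<omega> i)) = PiM I (\<lambda>_. \<mu>)"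
    by (intro PiM_cong refl distr_PiM_component) (use assms in auto)
  show ?thesis
    by (subst P.indep_vars_iff_distr_eq_PiM'[OF assms(2)]) (auto simp: 1 2 intro: measurable_component_singleton)
qed




lemma indep_two_blocks:
  fixes \<mu> :: "real measure" and I :: "nat set"
  assumes mu: "prob_space \<mu>" "sets \<mu> = sets borel"
    and I: "I \<noteq> {}" "J1 \<subseteq> I" "J2 \<subseteq> I" "J1 \<inter> J2 = {}" and U: "U \<in> sets borel"
  shows "measure (PiM I (\<lambda>_. \<mu>)) {X \<in> space (PiM I (\<lambda>_. \<mu>)). (\<Sum>i\<in>J1. X i) \<in> U \<and> (\<Sum>i\<in>J2. X i) \<in> U}
    = measure (PiM I (\<lambda>_. \<mu>)) {X \<in> space (PiM I (\<lambda>_. \<mu>)). (\<Sum>i\<in>J1. X i) \<in> U}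
    * measure (PiM I (\<lambda>_. \<mu>)) {X \<in> space (PiM I (\<lambda>_. \<mu>)). (\<Sum>i\<in>J2. X i) \<in> U}"
proof -
  interpret P: prob_space "PiM I (\<lambda>_. \<mu>)" by (intro prob_space_PiM mu(1))
  define Kb where "Kb j = (if j = (0::nat) then J1 else J2)" for j
  have ind1: "P.indep_vars (\<lambda>j. PiM (Kb j) (\<lambda>_. \<mu>)) (\<lambda>j \<omega>. restrict (\<lambda>i. \<omega> i) (Kb j)) {0,1}"
    by (rule P.indep_vars_restrict[OF indep_coords[OF mu(1) I(1)]])
       (use I in \<open>auto simp: disjoint_family_on_def Kb_def\<close>)
  have ind2: "P.indep_vars (\<lambda>_. borel) (\<lambda>j \<omega>. (\<lambda>y. \<Sum>i\<in>Kb j. y i) (restrict (\<lambda>i. \<omega> i) (Kb j))) {0,1}"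
  proof (rule P.indep_vars_compose2[OF ind1])
    fix j :: nat
    have "(\<lambda>y. \<Sum>i\<in>Kb j. y i) \<in> borel_measurable (Pi\<^sub>M (Kb j) (\<lambda>_. \<mu>))"
      by (rule borel_measurable_sum) (rule comp_meas[OF mu(2)])
    then show "(\<lambda>y. \<Sum>i\<in>Kb j. y i) \<in> borel_measurable (Pi\<^sub>M (Kb j) (\<lambda>_. \<mu>))" .
  qed
  have eq: "(\<lambda>\<omega>. (\<lambda>y. \<Sum>i\<in>Kb j. y i) (restrict (\<lambda>i. \<omega> i) (Kb j))) -` U \<inter> space (PiM I (\<lambda>_. \<mu>))
     = {X \<in> space (PiM I (\<lambda>_. \<mu>)). (\<Sum>i\<in>Kb j. X i) \<in> U}" for j
    by auto
  have "P.prob (\<Inter>j\<in>{0,1}. (\<lambda>\<omega>. (\<lambda>y. \<Sum>i\<in>Kb j. y i) (restrict (\<lambda>i. \<omega> i) (Kb j))) -` U \<inter> space (PiM I (\<lambda>_. \<mu>)))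
     = (\<Prod>j\<in>{0,1}. P.prob ((\<lambda>\<omega>. (\<lambda>y. \<Sum>i\<in>Kb j. y i) (restrict (\<lambda>i. \<omega> i) (Kb j))) -` U \<inter> space (PiM I (\<lambda>_. \<mu>))))"
    by (rule P.indep_varsD_finite[OF ind2]) (use U in auto)
  moreover have "{x. sum x J1 \<in> U \<and> x \<in> space (Pi\<^sub>M I (\<lambda>_. \<mu>)) \<and> sum x J2 \<in> U \<and> x \<in> space (Pi\<^sub>M I (\<lambda>_. \<mu>))}
    = {X \<in> space (Pi\<^sub>M I (\<lambda>_. \<mu>)). sum X J1 \<in> U \<and> sum X J2 \<in> U}" by blast
  ultimately show ?thesis unfolding eq by (simp add: Kb_def Collect_conj_eq[symmetric] Int_def conj_commute)
qed




lemma splitK: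
  fixes \<mu> :: "real measure"
  assumes mu: "prob_space \<mu>" and k: "k \<in> I'" and S: "S \<in> sets (PiM I' (\<lambda>_. \<mu>))"
  shows "emeasure (PiM I' (\<lambda>_. \<mu>)) S =
    (\<integral>\<^sup>+c. emeasure (PiM (I' - {k}) (\<lambda>_. \<mu>)) {X \<in> space (PiM (I' - {k}) (\<lambda>_. \<mu>)). X(k := c) \<in> S} \<partial>\<mu>)"
proof -
  define I where "I = I' - {k}"
  have I': "insert k I = I'" using k by (auto simp: I_def)
  interpret P: prob_space "PiM I (\<lambda>_. \<mu>)" by (intro prob_space_PiM mu)
  have D: "distr (\<mu> \<Otimes>\<^sub>M PiM I (\<lambda>_. \<mu>)) (PiM I' (\<lambda>_. \<mu>)) (\<lambda>(x,X). X(k:=x)) = PiM I' (\<lambda>_. \<mu>)"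
    using distr_pair_PiM_eq_PiM[of I "\<lambda>_. \<mu>" k] mu by (simp add: I')
  have meas: "(\<lambda>(x,X). X(k:=x)) \<in> measurable (\<mu> \<Otimes>\<^sub>M PiM I (\<lambda>_. \<mu>)) (PiM I' (\<lambda>_. \<mu>))"
    unfolding I'[symmetric] by measurable
  have "emeasure (PiM I' (\<lambda>_. \<mu>)) S = emeasure (\<mu> \<Otimes>\<^sub>M PiM I (\<lambda>_. \<mu>)) ((\<lambda>(x,X). X(k:=x)) -` S \<inter> space (\<mu> \<Otimes>\<^sub>M PiM I (\<lambda>_. \<mu>)))"
    by (subst D[symmetric]) (simp add: emeasure_distr[OF meas S])
  also have "\<dots> = (\<integral>\<^sup>+c. emeasure (PiM I (\<lambda>_. \<mu>)) (Pair c -` ((\<lambda>(x,X). X(k:=x)) -` S \<inter> space (\<mu> \<Otimes>\<^sub>M PiM I (\<lambda>_. \<mu>)))) \<partial>\<mu>)"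
    by (rule P.emeasure_pair_measure_alt) (rule measurable_sets[OF meas S])
  also have "\<dots> = (\<integral>\<^sup>+c. emeasure (PiM I (\<lambda>_. \<mu>)) {X \<in> space (PiM I (\<lambda>_. \<mu>)). X(k := c) \<in> S} \<partial>\<mu>)"
    by (intro nn_integral_cong arg_cong2[where f=emeasure] refl) (auto simp: space_pair_measure)
  finally show ?thesis by (simp add: I_def)
qed




lemma comp_meas_all:
  fixes \<mu> :: "real measure"
  assumes "sets \<mu> = sets borel"
  shows "(\<lambda>\<omega>. \<omega> i) \<in> borel_measurable (PiM I (\<lambda>_. \<mu>))"
proof (cases "i \<in> I")
  case True then show ?thesis by (rule comp_meas[OF assms])
next
  case False
  have "(\<lambda>_. undefined) \<in> borel_measurable (PiM I (\<lambda>_. \<mu>))" by simp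
  then show ?thesis
    by (rule measurable_cong[THEN iffD1, rotated]) (use False in \<open>auto simp: space_PiM PiE_def extensional_def\<close>)
qed

lemma sum_tail:
  fixes \<mu> :: "real measure"
  assumes mu: "prob_space \<mu>" "sets \<mu> = sets borel" and t: "0 \<le> t"
  shows "1 - t \<le> measure (PiM {..<m} (\<lambda>_. \<mu>)) {x \<in> space (PiM {..<m} (\<lambda>_. \<mu>)). t \<le> conv_pow_cdf \<mu> m (\<Sum>i<m. x i)}"
proof -
  define Q where "Q = PiM {..<m} (\<lambda>_. \<mu>)"
  interpret Q: prob_space Q unfolding Q_def by (intro prob_space_PiM mu(1))
  define s where "s x = (\<Sum>i<m. x i)" for x :: "nat \<Rightarrow> real"
  have sm: "s \<in> borel_measurable Q"
    unfolding s_def Q_def by (intro borel_measurable_sum comp_meas_all[OF mu(2)])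
  define \<nu> where "\<nu> = distr Q borel s"
  interpret \<nu>: real_distribution \<nu> unfolding \<nu>_def by (rule Q.real_distribution_distr[OF sm])
  have cdf: "cdf \<nu> y = conv_pow_cdf \<mu> m y" for y
  proof -
    have "cdf \<nu> y = measure Q (s -` {..y} \<inter> space Q)"
      unfolding cdf_def \<nu>_def by (rule measure_distr[OF sm]) simp
    also have "s -` {..y} \<inter> space Q = {\<omega> \<in> space Q. (\<Sum>i<m. \<omega> i) \<le> y}" by (auto simp: s_def)
    finally show ?thesis by (simp add: conv_pow_cdf_def Q_def)
  qed
  have Cm: "{y. cdf \<nu> y < t} \<in> sets borel"
  proof -
    have "mono (cdf \<nu>)" by (auto intro: monoI \<nu>.cdf_nondecreasing)
    then have "cdf \<nu> \<in> borel_measurable borel" by (rule borel_measurable_mono)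
    then show ?thesis by measurable
  qed
  have "{x \<in> space Q. t \<le> conv_pow_cdf \<mu> m (\<Sum>i<m. x i)} = s -` (UNIV - {y. cdf \<nu> y < t}) \<inter> space Q"
    by (auto simp: cdf s_def)
  then have "measure Q {x \<in> space Q. t \<le> conv_pow_cdf \<mu> m (\<Sum>i<m. x i)} = measure \<nu> (UNIV - {y. cdf \<nu> y < t})"
    using Cm by (subst \<nu>_def, subst measure_distr[OF sm]) auto
  also have "\<dots> = 1 - measure \<nu> {y. cdf \<nu> y < t}"
    using \<nu>.prob_compl[of "{y. cdf \<nu> y < t}"] Cm by (simp add: \<nu>.events_eq_borel)
  finally show ?thesis using \<nu>.cdf_lt_bound[OF t] unfolding Q_def by linarith
qed




lemma modinj1:
  fixes a b K r :: nat
  assumes "a < K" "b < K" "(a + r) mod K = (b + r) mod K" "a \<le> b"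
  shows "a = b"
proof (rule ccontr)
  assume "a \<noteq> b"
  then have pos: "0 < b - a" using assms(4) by simp
  have "K dvd (b + r) - (a + r)" using assms mod_eq_dvd_iff_nat[of "a+r" "b+r" K] by simp
  then have "K dvd b - a" by simp
  then have "K \<le> b - a" using pos by (rule dvd_imp_le)
  moreover have "b - a < K" using assms by simp
  ultimately show False by simp
qed

lemma modinj:
  fixes a b K r :: nat
  assumes "a < K" "b < K" "(a + r) mod K = (b + r) mod K"
  shows "a = b"
  using modinj1[of a K b r] modinj1[of b K a r] assms by (cases "a \<le> b") auto

lemma main_bound:
  fixes \<mu> :: "real measure" and K N :: nat
  assumes rd: "real_distribution \<mu>" and K: "1 \<le> K" and N: "2 * (K + 1) \<le> N"
  shows "1 / real K ^ 3 \<le> measure (PiM {..<N} (\<lambda>_. \<mu>))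
         {\<omega> \<in> space (PiM {..<N} (\<lambda>_. \<mu>)).
            Min ((\<lambda>l. conv_pow_cdf \<mu> (K + 1) (\<Sum>i=l..l+K. \<omega> (i mod N))) ` {0..K})
              \<ge> 1 - 1 / real K}"
proof -
  interpret mu: real_distribution \<mu> by (rule rd)
  have mu1: "prob_space \<mu>" by unfold_locales
  have mu2: "sets \<mu> = sets borel" by (rule mu.events_eq_borel)
  have spmu: "space \<mu> = UNIV" by (rule mu.space_eq_univ)
  define M where "M = PiM {..<N} (\<lambda>_. \<mu>)"
  interpret M: prob_space M unfolding M_def by (intro prob_space_PiM mu1)
  define G where "G = conv_pow_cdf \<mu> (K + 1)"
  have Gm[measurable]: "G \<in> borel_measurable borel" unfolding G_def by (rule conv_pow_cdf_meas[OF mu1 mu2])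
  have Gmono: "x \<le> y \<Longrightarrow> G x \<le> G y" for x y unfolding G_def by (rule conv_pow_cdf_mono[OF mu1 mu2])
  have cm[measurable]: "(\<lambda>\<omega>. \<omega> i) \<in> borel_measurable M" for i unfolding M_def by (rule comp_meas_all[OF mu2])
  define t where "t = 1 - 1 / real K"
  have t0: "0 \<le> t" using K by (simp add: t_def)
  define A where "A = {\<omega> \<in> space M. t \<le> G (\<omega> K + (\<Sum>j<K. \<omega> j)) \<and> t \<le> G (\<omega> K + (\<Sum>j<K. \<omega> (Suc K + j)))}"
  define B where "B = {\<omega> \<in> space M. \<forall>m\<in>{..K}. real m / real K * (\<Sum>j<K. \<omega> (Suc K + j) - \<omega> j) \<le> (\<Sum>j<m. \<omega> (Suc K + j) - \<omega> j)}"
  define E where "E = {\<omega> \<in> space M. \<forall>l\<in>{0..K}. t \<le> G (\<Sum>i=l..l+K. \<omega> (i mod N))}"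
  have Am: "A \<in> sets M" unfolding A_def by measurable
  have Bm: "B \<in> sets M" unfolding B_def
  proof (intro sets.sets_Collect_finite_All)
    fix m :: nat
    show "{\<omega> \<in> space M. real m / real K * (\<Sum>j<K. \<omega> (Suc K + j) - \<omega> j) \<le> (\<Sum>j<m. \<omega> (Suc K + j) - \<omega> j)} \<in> sets M"
      by measurable
  qed simp
  have Em: "E \<in> sets M" unfolding E_def by measurable
  have Eeq: "{\<omega> \<in> space M. Min ((\<lambda>l. G (\<Sum>i=l..l+K. \<omega> (i mod N))) ` {0..K}) \<ge> t} = E"
    unfolding E_def by (auto simp: Min_ge_iff)
  have ABE: "A \<inter> B \<subseteq> E"
  proof
    fix \<omega> assume wAB: "\<omega> \<in> A \<inter> B"
    define S0 where "S0 = \<omega> K + (\<Sum>j<K. \<omega> j)"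
    define SK where "SK = \<omega> K + (\<Sum>j<K. \<omega> (Suc K + j))"
    define D where "D l = (\<Sum>j<l. \<omega> (Suc K + j) - \<omega> j)" for l
    have DK: "D K = SK - S0" by (simp add: D_def S0_def SK_def sum_subtractf)
    have S0t: "t \<le> G S0" and SKt: "t \<le> G SK" using wAB by (auto simp: A_def S0_def SK_def)
    have Dl: "real l / real K * (SK - S0) \<le> D l" if "l \<le> K" for l
      using wAB that by (auto simp: B_def D_def DK[symmetric])
    show "\<omega> \<in> E" unfolding E_def
    proof (intro CollectI conjI ballI)
      show "\<omega> \<in> space M" using wAB by (auto simp: A_def)
      fix l assume l: "l \<in> {0..K}"
      have "(\<Sum>i=l..l+K. \<omega> (i mod N)) = (\<Sum>i=l..l+K. \<omega> i)"
        using l N by (intro sum.cong refl) auto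
      also have "\<dots> = (\<Sum>i<K+1. \<omega> i) + (\<Sum>j<l. \<omega> (K+1+j) - \<omega> j)" by (rule window_sum)
      also have "\<dots> = S0 + D l" by (simp add: S0_def D_def)
      finally have Sl: "(\<Sum>i=l..l+K. \<omega> (i mod N)) = S0 + D l" .
      have lam: "0 \<le> real l / real K" "real l / real K \<le> 1" using l K by auto
      have "min S0 SK \<le> S0 + real l / real K * (SK - S0)"
      proof (cases "S0 \<le> SK")
        case True then show ?thesis using lam by (simp add: min_def)
      next
        case False
        have "real l / real K * (S0 - SK) \<le> 1 * (S0 - SK)"
          using lam False by (intro mult_right_mono) auto
        moreover have "real l / real K * (SK - S0) = - (real l / real K * (S0 - SK))"
          by (simp only: right_diff_distrib)
        ultimately show ?thesis using False by (simp add: min_def)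
      qed
      also have "\<dots> \<le> S0 + D l" using Dl l by auto
      finally have "G (min S0 SK) \<le> G (\<Sum>i=l..l+K. \<omega> (i mod N))" unfolding Sl by (rule Gmono)
      moreover have "t \<le> G (min S0 SK)" using S0t SKt by (simp add: min_def)
      ultimately show "t \<le> G (\<Sum>i=l..l+K. \<omega> (i mod N))" by linarith
    qed
  qed
  have rot: "M.prob A \<le> real K * M.prob (A \<inter> B)"
  proof -
    define rt where "rt r n = (if n < K then (n + r) mod K else if Suc K \<le> n \<and> n < Suc K + K then Suc K + (n - Suc K + r) mod K else n)" for r n :: nat
    define T where "T r \<omega> = (\<lambda>n\<in>{..<N}. \<omega> (rt r n))" for r and \<omega> :: "nat \<Rightarrow> real"
    have modK: "x mod K < K" for x using K by simp
    have rtN: "rt r \<in> {..<N} \<rightarrow> {..<N}" for r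
    proof
      fix n assume "n \<in> {..<N}"
      have a: "(n + r) mod K < K" and b: "(n - Suc K + r) mod K < K" by (rule modK)+
      have "rt r n < N"
      proof (cases "n < K")
        case True then have "rt r n = (n + r) mod K" by (simp add: rt_def)
        moreover have "K < N" using N by simp
        ultimately show ?thesis using a by (metis less_trans)
      next
        case F: False
        show ?thesis
        proof (cases "Suc K \<le> n \<and> n < Suc K + K")
          case True then have "rt r n = Suc K + (n - Suc K + r) mod K" using F by (simp add: rt_def)
          moreover have "Suc K + (n - Suc K + r) mod K < Suc K + K" using b by (rule add_strict_left_mono)
          moreover have "Suc K + K \<le> N" using N by simp
          ultimately show ?thesis by linarith
        next
          case False then have "rt r n = n" using F unfolding rt_def by auto
          then show ?thesis using \<open>n \<in> {..<N}\<close> by simp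
        qed
      qed
      then show "rt r n \<in> {..<N}" by simp
    qed
    have Kpos: "0 < K" using K by simp
    have R1: "rt r n < K" if "n < K" for r n using that Kpos by (simp add: rt_def)
    have R2: "Suc K \<le> rt r n \<and> rt r n < Suc K + K" if "Suc K \<le> n \<and> n < Suc K + K" for r n
      using that Kpos by (simp add: rt_def)
    have R3: "rt r n = n" if "\<not> n < K" "\<not> (Suc K \<le> n \<and> n < Suc K + K)" for r n
      using that unfolding rt_def by auto
    have rtinj: "inj_on (rt r) {..<N}" for r
    proof (rule inj_onI)
      fix a b assume ab: "a \<in> {..<N}" "b \<in> {..<N}" "rt r a = rt r b"
      have ra: "rt r a = rt r b" by (rule ab(3))
      consider (B1) "b < K" | (B2) "Suc K \<le> b \<and> b < Suc K + K" | (B3) "\<not> b < K" "\<not> (Suc K \<le> b \<and> b < Suc K + K)" by blast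
      note bc = this
      consider (A1) "a < K" | (A2) "Suc K \<le> a \<and> a < Suc K + K" | (A3) "\<not> a < K" "\<not> (Suc K \<le> a \<and> a < Suc K + K)" by blast
      then show "a = b"
      proof cases
        case A1
        show ?thesis using bc
        proof cases
          case B1
          have "rt r a = (a + r) mod K" using A1 by (simp add: rt_def)
          moreover have "rt r b = (b + r) mod K" using B1 by (simp add: rt_def)
          ultimately show ?thesis using ra by (intro modinj[OF A1 B1, of r]) simp
        next
          case B2 then show ?thesis using R1[of a r] R2[of b r] ra A1 by linarith
        next
          case B3 then show ?thesis using R1[of a r] R3[of b r] ra A1 by linarith
        qed
      next
        case A2
        show ?thesis using bc
        proof cases
          case B1 then show ?thesis using R1[of b r] R2[of a r] ra A2 by linarith
        next
          case B2
          have "rt r a = Suc K + (a - Suc K + r) mod K" using A2 by (simp add: rt_def)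
          moreover have "rt r b = Suc K + (b - Suc K + r) mod K" using B2 by (simp add: rt_def)
          ultimately have eqm: "(a - Suc K + r) mod K = (b - Suc K + r) mod K" using ra by simp
          have a3: "a - Suc K < K" using A2 by linarith
          have b3: "b - Suc K < K" using B2 by linarith
          have "a - Suc K = b - Suc K" by (rule modinj[OF a3 b3 eqm])
          then show ?thesis using B2 A2 by linarith
        next
          case B3 then show ?thesis using R2[of a r] R3[of b r] ra A2 by linarith
        qed
      next
        case A3
        show ?thesis using bc
        proof cases
          case B1 then show ?thesis using R1[of b r] R3[of a r] ra A3 by linarith
        next
          case B2 then show ?thesis using R2[of b r] R3[of a r] ra A3 by linarith
        next
          case B3 then show ?thesis using R3[of b r, OF B3] R3[of a r, OF A3] ra by simp
        qed
      qed
    qed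
    have Tm: "T r \<in> measurable M M" for r
      unfolding T_def M_def by (rule reindex_meas[OF rtinj rtN])
    have Tpres: "M.prob (T r -` Q \<inter> space M) = M.prob Q" if "Q \<in> sets M" for r Q
      using reindex_prob[OF mu1 rtinj rtN, of Q] that unfolding T_def M_def by simp
    have cover: "A \<subseteq> (\<Union>r\<in>{..<K}. T r -` (A \<inter> B) \<inter> space M)"
    proof
      fix \<omega> assume wA: "\<omega> \<in> A"
      then have wsp: "\<omega> \<in> space M" by (simp add: A_def)
      define d where "d j = \<omega> (Suc K + j) - \<omega> j" for j
      obtain r where r: "r < K" "\<forall>m\<le>K. real m / real K * (\<Sum>j<K. d j) \<le> (\<Sum>j<m. d ((j + r) mod K))"
        using cycle_lemma[of K d] K by auto
      define \<omega>' where "\<omega>' = T r \<omega>"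
      have w'sp: "\<omega>' \<in> space M" unfolding \<omega>'_def using measurable_space[OF Tm wsp] .
      have w'K: "\<omega>' K = \<omega> K" using N by (simp add: \<omega>'_def T_def rt_def)
      have w'L: "\<omega>' j = \<omega> ((j + r) mod K)" if "j < K" for j
        using that N by (simp add: \<omega>'_def T_def rt_def)
      have w'R: "\<omega>' (Suc K + j) = \<omega> (Suc K + (j + r) mod K)" if "j < K" for j
        using that N by (simp add: \<omega>'_def T_def rt_def)
      have sL: "(\<Sum>j<K. \<omega>' j) = (\<Sum>j<K. \<omega> j)"
      proof -
        have "(\<Sum>j<K. \<omega>' j) = (\<Sum>j<K. \<omega> ((j + r) mod K))" by (rule sum.cong) (simp_all add: w'L)
        also have "\<dots> = (\<Sum>j<K. \<omega> j)" by (rule rot_sum[OF Kpos])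
        finally show ?thesis .
      qed
      have sR: "(\<Sum>j<K. \<omega>' (Suc K + j)) = (\<Sum>j<K. \<omega> (Suc K + j))"
      proof -
        have "(\<Sum>j<K. \<omega>' (Suc K + j)) = (\<Sum>j<K. (\<lambda>i. \<omega> (Suc K + i)) ((j + r) mod K))"
        proof (rule sum.cong)
          fix x assume "x \<in> {..<K}"
          then show "\<omega>' (Suc K + x) = (\<lambda>i. \<omega> (Suc K + i)) ((x + r) mod K)" using w'R[of x] by simp
        qed simp
        also have "\<dots> = (\<Sum>j<K. (\<lambda>i. \<omega> (Suc K + i)) j)" by (rule rot_sum[OF Kpos])
        finally show ?thesis by simp
      qed
      have sD: "(\<Sum>j<m. \<omega>' (Suc K + j) - \<omega>' j) = (\<Sum>j<m. d ((j + r) mod K))" if "m \<le> K" for m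
      proof (rule sum.cong)
        fix x assume "x \<in> {..<m}"
        then have "x < K" using that by simp
        then show "\<omega>' (Suc K + x) - \<omega>' x = d ((x + r) mod K)"
          using w'R[of x] w'L[of x] by (simp add: d_def)
      qed simp
      have sDK: "(\<Sum>j<K. d ((j + r) mod K)) = (\<Sum>j<K. d j)" by (rule rot_sum[OF Kpos])
      have "\<omega>' \<in> A" using wA w'sp unfolding A_def by (simp only: w'K sL sR mem_Collect_eq) 
      moreover have "\<omega>' \<in> B" unfolding B_def
      proof (intro CollectI conjI ballI w'sp)
        fix m assume "m \<in> {..K}"
        then have m: "m \<le> K" by simp
        have "real m / real K * (\<Sum>j<K. \<omega>' (Suc K + j) - \<omega>' j) = real m / real K * (\<Sum>j<K. d j)"
          using sD[OF order_refl] sDK by simp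
        also have "\<dots> \<le> (\<Sum>j<m. d ((j + r) mod K))" using r(2) m by blast
        also have "\<dots> = (\<Sum>j<m. \<omega>' (Suc K + j) - \<omega>' j)" using sD[OF m] by simp
        finally show "real m / real K * (\<Sum>j<K. \<omega>' (Suc K + j) - \<omega>' j) \<le> (\<Sum>j<m. \<omega>' (Suc K + j) - \<omega>' j)" .
      qed
      ultimately have "\<omega> \<in> T r -` (A \<inter> B) \<inter> space M" using wsp unfolding \<omega>'_def by simp
      then show "\<omega> \<in> (\<Union>r\<in>{..<K}. T r -` (A \<inter> B) \<inter> space M)" using r(1) by blast
    qed
    have ABm: "A \<inter> B \<in> sets M" using Am Bm by simp
    have "M.prob A \<le> M.prob (\<Union>r\<in>{..<K}. T r -` (A \<inter> B) \<inter> space M)"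
    proof (rule M.finite_measure_mono[OF cover])
      have pre: "T r -` (A \<inter> B) \<inter> space M \<in> sets M" for r by (rule measurable_sets[OF Tm ABm])
      show "(\<Union>r\<in>{..<K}. T r -` (A \<inter> B) \<inter> space M) \<in> sets M"
        by (intro sets.finite_UN finite_lessThan pre)
    qed
    also have "\<dots> \<le> (\<Sum>r\<in>{..<K}. M.prob (T r -` (A \<inter> B) \<inter> space M))"
      using measurable_sets[OF Tm ABm] by (intro M.finite_measure_subadditive_finite) auto
    also have "\<dots> = (\<Sum>r\<in>{..<K}. M.prob (A \<inter> B))" using Tpres[OF ABm] by simp
    finally show ?thesis by simp
  qed
  have PA: "(1 / real K) ^ 2 \<le> M.prob A"
  proof -
    note cmall[measurable] = comp_meas_all[OF mu2]
    define I where "I = {..<N} - {K}"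
    define PI where "PI = PiM I (\<lambda>_. \<mu>)"
    interpret PI: prob_space PI unfolding PI_def by (intro prob_space_PiM mu1)
    define Q where "Q = PiM {..<K} (\<lambda>_. \<mu>)"
    interpret Q: prob_space Q unfolding Q_def by (intro prob_space_PiM mu1)
    define U where "U c = {s. t \<le> G (c + s)}" for c
    have Um: "U c \<in> sets borel" for c unfolding U_def by measurable
    define Qs where "Qs c = {x \<in> space Q. t \<le> G (c + (\<Sum>j<K. x j))}" for c
    have Qsm: "Qs c \<in> sets Q" for c unfolding Qs_def Q_def by measurable
    define fr where "fr c = Q.prob (Qs c)" for c
    define Rb where "Rb = (\<lambda>j. Suc K + j) ` {..<K}"
    have KN: "K < N" using N by simp
    have LbI: "{..<K} \<subseteq> I" and RbI: "Rb \<subseteq> I" and LR: "{..<K} \<inter> Rb = {}"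
      using N by (auto simp: I_def Rb_def)
    have "Suc K \<in> I" using N by (simp add: I_def)
    then have Ine: "I \<noteq> {}" by auto
    have blkL: "PI.prob {X \<in> space PI. (\<Sum>i\<in>{..<K}. X i) \<in> U c} = fr c" for c
    proof -
      have "(\<lambda>\<omega>. \<lambda>n\<in>{..<K}. \<omega> n) -` Qs c \<inter> space PI = {X \<in> space PI. (\<Sum>i\<in>{..<K}. X i) \<in> U c}"
        unfolding Qs_def U_def Q_def PI_def
        by (auto simp: space_PiM PiE_iff extensional_def)
      moreover have "measure PI ((\<lambda>\<omega>. \<lambda>n\<in>{..<K}. \<omega> n) -` Qs c \<inter> space PI) = fr c"
        unfolding PI_def fr_def Q_def
        by (rule reindex_prob[OF mu1 _ _ Qsm[unfolded Q_def]]) (use LbI in auto)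
      ultimately show ?thesis by simp
    qed
    have blkR: "PI.prob {X \<in> space PI. (\<Sum>i\<in>Rb. X i) \<in> U c} = fr c" for c
    proof -
      have sre: "(\<Sum>i\<in>Rb. X i) = (\<Sum>n<K. X (Suc K + n))" for X :: "nat \<Rightarrow> real"
        unfolding Rb_def by (subst sum.reindex) (auto simp: inj_on_def)
      have "(\<lambda>\<omega>. \<lambda>n\<in>{..<K}. \<omega> (Suc K + n)) -` Qs c \<inter> space PI = {X \<in> space PI. (\<Sum>i\<in>Rb. X i) \<in> U c}"
        unfolding Qs_def U_def Q_def PI_def sre
        by (auto simp: space_PiM PiE_iff extensional_def)
      moreover have "measure PI ((\<lambda>\<omega>. \<lambda>n\<in>{..<K}. \<omega> (Suc K + n)) -` Qs c \<inter> space PI) = fr c"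
        unfolding PI_def fr_def Q_def
        by (rule reindex_prob[OF mu1 _ _ Qsm[unfolded Q_def]]) (use RbI in \<open>auto simp: inj_on_def Rb_def\<close>)
      ultimately show ?thesis by simp
    qed
    have NI: "{..<N} - {K} = I" by (simp add: I_def)
    have split: "emeasure M S = (\<integral>\<^sup>+c. emeasure PI {X \<in> space PI. X(K := c) \<in> S} \<partial>\<mu>)" if "S \<in> sets M" for S
      using splitK[OF mu1, of K "{..<N}" S] that KN unfolding M_def PI_def NI by simp
    have updsp: "X(K := c) \<in> space M" if "X \<in> space PI" for X c
    proof -
      have "X(K := c) \<in> PiE (insert K I) (\<lambda>_. space \<mu>)"
        using that spmu by (intro PiE_fun_upd) (auto simp: PI_def space_PiM)
      moreover have "insert K I = {..<N}" using KN by (auto simp: I_def)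
      ultimately show ?thesis by (simp add: M_def space_PiM)
    qed
    have updL: "(\<Sum>j<K. (X(K := c)) j) = (\<Sum>j\<in>{..<K}. X j)" for X :: "nat \<Rightarrow> real" and c
      by (rule sum.cong) auto
    have updR: "(\<Sum>j<K. (X(K := c)) (Suc K + j)) = (\<Sum>j\<in>Rb. X j)" for X :: "nat \<Rightarrow> real" and c
      unfolding Rb_def by (subst sum.reindex) (auto simp: inj_on_def)
    have updR': "(\<Sum>j<K. X (Suc (K + j))) = (\<Sum>j\<in>Rb. X j)" for X :: "nat \<Rightarrow> real"
      unfolding Rb_def by (subst sum.reindex) (auto simp: inj_on_def)
    have updR2: "(\<Sum>i\<in>Rb. if i = K then c else X i) = sum X Rb" for X :: "nat \<Rightarrow> real" and c
      by (rule sum.cong) (auto simp: Rb_def)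
    have eA: "emeasure M A = (\<integral>\<^sup>+c. ennreal (fr c * fr c) \<partial>\<mu>)"
    proof -
      have "emeasure M A = (\<integral>\<^sup>+c. emeasure PI {X \<in> space PI. X(K := c) \<in> A} \<partial>\<mu>)" by (rule split[OF Am])
      also have "\<dots> = (\<integral>\<^sup>+c. ennreal (fr c * fr c) \<partial>\<mu>)"
      proof (rule nn_integral_cong)
        fix c
        have "{X \<in> space PI. X(K := c) \<in> A} = {X \<in> space PI. (\<Sum>i\<in>{..<K}. X i) \<in> U c \<and> (\<Sum>i\<in>Rb. X i) \<in> U c}"
          using updsp by (auto simp: A_def U_def updL updR updR' updR2)
        then have "emeasure PI {X \<in> space PI. X(K := c) \<in> A} = ennreal (PI.prob {X \<in> space PI. (\<Sum>i\<in>{..<K}. X i) \<in> U c \<and> (\<Sum>i\<in>Rb. X i) \<in> U c})"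
          by (simp add: PI.emeasure_eq_measure)
        also have "PI.prob {X \<in> space PI. (\<Sum>i\<in>{..<K}. X i) \<in> U c \<and> (\<Sum>i\<in>Rb. X i) \<in> U c} = fr c * fr c"
          unfolding PI_def
          using indep_two_blocks[OF mu1 mu2 Ine LbI RbI LR Um[of c]] blkL[of c] blkR[of c] by (simp add: PI_def)
        finally show "emeasure PI {X \<in> space PI. X(K := c) \<in> A} = ennreal (fr c * fr c)" .
      qed
      finally show ?thesis .
    qed
    define A0 where "A0 = {\<omega> \<in> space M. t \<le> G (\<omega> K + (\<Sum>j<K. \<omega> j))}"
    have A0m: "A0 \<in> sets M" unfolding A0_def by measurable
    have eA0: "emeasure M A0 = (\<integral>\<^sup>+c. ennreal (fr c) \<partial>\<mu>)"
    proof -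
      have "emeasure M A0 = (\<integral>\<^sup>+c. emeasure PI {X \<in> space PI. X(K := c) \<in> A0} \<partial>\<mu>)" by (rule split[OF A0m])
      also have "\<dots> = (\<integral>\<^sup>+c. ennreal (fr c) \<partial>\<mu>)"
      proof (rule nn_integral_cong)
        fix c
        have "{X \<in> space PI. X(K := c) \<in> A0} = {X \<in> space PI. (\<Sum>i\<in>{..<K}. X i) \<in> U c}"
          using updsp by (auto simp: A0_def U_def updL)
        then show "emeasure PI {X \<in> space PI. X(K := c) \<in> A0} = ennreal (fr c)"
          using blkL[of c] by (simp add: PI.emeasure_eq_measure)
      qed
      finally show ?thesis .
    qed
    have frmono: "mono fr"
    proof (rule monoI)
      fix c c' :: real assume "c \<le> c'"
      then have "Qs c \<subseteq> Qs c'" unfolding Qs_def using Gmono by (auto intro: order_trans)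
      then show "fr c \<le> fr c'" unfolding fr_def by (intro Q.finite_measure_mono Qsm)
    qed
    have frm: "fr \<in> borel_measurable \<mu>"
      using borel_measurable_mono[OF frmono] by (simp add: measurable_cong_sets[OF mu2 refl])
    have fr01: "0 \<le> fr c" "fr c \<le> 1" for c unfolding fr_def by auto
    have int1: "integrable \<mu> fr"
      by (rule mu.integrable_const_bound[where B=1]) (use fr01 frm in auto)
    have int2: "integrable \<mu> (\<lambda>c. (fr c)\<^sup>2)"
      by (rule mu.integrable_const_bound[where B=1]) (use fr01 frm in \<open>auto simp: abs_square_le_1\<close>)
    have pA: "M.prob A = (\<integral>c. (fr c)\<^sup>2 \<partial>\<mu>)"
    proof -
      have "ennreal (M.prob A) = ennreal (\<integral>c. (fr c)\<^sup>2 \<partial>\<mu>)"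
        using eA nn_integral_eq_integral[OF int2] by (simp add: M.emeasure_eq_measure power2_eq_square)
      then show ?thesis by (simp add: integral_nonneg_AE)
    qed
    have pA0: "M.prob A0 = (\<integral>c. fr c \<partial>\<mu>)"
    proof -
      have "ennreal (M.prob A0) = ennreal (\<integral>c. fr c \<partial>\<mu>)"
        using eA0 nn_integral_eq_integral[OF int1] fr01 by (simp add: M.emeasure_eq_measure)
      then show ?thesis using fr01 by (simp add: integral_nonneg_AE)
    qed
    have var: "(\<integral>c. fr c \<partial>\<mu>)\<^sup>2 \<le> (\<integral>c. (fr c)\<^sup>2 \<partial>\<mu>)"
    proof -
      have "0 \<le> mu.variance fr" by (rule integral_nonneg_AE) simp
      then show ?thesis using mu.variance_eq[OF int1 int2] by simp
    qed
    have tail: "1 - t \<le> M.prob A0"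
    proof -
      have "1 - t \<le> measure (PiM {..<K+1} (\<lambda>_. \<mu>)) {x \<in> space (PiM {..<K+1} (\<lambda>_. \<mu>)). t \<le> conv_pow_cdf \<mu> (K+1) (\<Sum>i<K+1. x i)}"
        by (rule sum_tail[OF mu1 mu2 t0])
      also have "\<dots> = M.prob ((\<lambda>\<omega>. \<lambda>n\<in>{..<K+1}. \<omega> n) -` {x \<in> space (PiM {..<K+1} (\<lambda>_. \<mu>)). t \<le> conv_pow_cdf \<mu> (K+1) (\<Sum>i<K+1. x i)} \<inter> space M)"
      proof -
        have "{x \<in> space (PiM {..<K+1} (\<lambda>_. \<mu>)). t \<le> conv_pow_cdf \<mu> (K+1) (\<Sum>i<K+1. x i)} \<in> sets (PiM {..<K+1} (\<lambda>_. \<mu>))"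
          using Gm unfolding G_def by measurable
        then show ?thesis unfolding M_def
          by (intro reindex_prob[OF mu1, symmetric]) (use N in auto)
      qed
      also have "(\<lambda>\<omega>. \<lambda>n\<in>{..<K+1}. \<omega> n) -` {x \<in> space (PiM {..<K+1} (\<lambda>_. \<mu>)). t \<le> conv_pow_cdf \<mu> (K+1) (\<Sum>i<K+1. x i)} \<inter> space M = A0"
      proof (rule set_eqI)
        fix \<omega> :: "nat \<Rightarrow> real"
        show "\<omega> \<in> (\<lambda>\<omega>. \<lambda>n\<in>{..<K+1}. \<omega> n) -` {x \<in> space (PiM {..<K+1} (\<lambda>_. \<mu>)). t \<le> conv_pow_cdf \<mu> (K+1) (\<Sum>i<K+1. x i)} \<inter> space M \<longleftrightarrow> \<omega> \<in> A0"
        proof (cases "\<omega> \<in> space M")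
          case True
          have r1: "(\<lambda>n\<in>{..<K+1}. \<omega> n) \<in> space (PiM {..<K+1} (\<lambda>_. \<mu>))"
            by (simp add: space_PiM spmu restrict_PiE_iff)
          have "(\<Sum>i<K+1. (\<lambda>n\<in>{..<K+1}. \<omega> n) i) = (\<Sum>i<K+1. \<omega> i)" by (rule sum.cong) auto
          also have "\<dots> = \<omega> K + (\<Sum>j<K. \<omega> j)" by simp
          finally have r2: "(\<Sum>i<K+1. (\<lambda>n\<in>{..<K+1}. \<omega> n) i) = \<omega> K + (\<Sum>j<K. \<omega> j)" .
          show ?thesis using True r1 unfolding A0_def G_def by (simp only: r2 vimage_eq Int_iff mem_Collect_eq simp_thms)
        next
          case False then show ?thesis by (simp add: A0_def)
        qed
      qed
      finally show ?thesis .
    qed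
    have "1 - t = 1 / real K" by (simp add: t_def)
    then have "(1 / real K)^2 \<le> (M.prob A0)^2" using tail by (intro power_mono) auto
    also have "\<dots> \<le> M.prob A" using var pA pA0 by simp
    finally show ?thesis .
  qed
  have "1 / real K ^ 3 = (1 / real K) ^ 2 / real K" by (simp add: power3_eq_cube power2_eq_square)
  also have "\<dots> \<le> M.prob (A \<inter> B)" using PA rot K by (simp add: divide_le_eq mult.commute)
  also have "\<dots> \<le> M.prob E" using ABE Em by (intro M.finite_measure_mono)
  finally show ?thesis using Eeq by (simp add: M_def G_def t_def)
qed


theorem mainTheorem3:
  shows "\<exists>c::real. c > 0 \<and>
    (\<forall>(\<mu>::real measure) (K::nat) (N::nat).
       real_distribution \<mu> \<longrightarrow> (\<forall>x. isCont (cdf \<mu>) x) \<longrightarrow>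
       K \<ge> 1 \<longrightarrow> N \<ge> 2 * (K + 1) \<longrightarrow>
       measure (PiM {..<N} (\<lambda>_. \<mu>))
         {\<omega> \<in> space (PiM {..<N} (\<lambda>_. \<mu>)).
            Min ((\<lambda>l. conv_pow_cdf \<mu> (K + 1) (\<Sum>i=l..l+K. \<omega> (i mod N))) ` {0..K})
              \<ge> 1 - 1 / real K}
       \<ge> c * real K powi (-3))"
proof (intro exI[of _ 1] conjI allI impI)
  fix \<mu> :: "real measure" and K N :: nat
  assume rd: "real_distribution \<mu>" and "\<forall>x. isCont (cdf \<mu>) x" and K: "K \<ge> 1" and N: "N \<ge> 2 * (K + 1)"
  have "real K powi (-3) = 1 / real K ^ 3" by (simp add: power_int_minus divide_inverse)
  then show "1 * real K powi (-3) \<le> measure (PiM {..<N} (\<lambda>_. \<mu>))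
         {\<omega> \<in> space (PiM {..<N} (\<lambda>_. \<mu>)).
            Min ((\<lambda>l. conv_pow_cdf \<mu> (K + 1) (\<Sum>i=l..l+K. \<omega> (i mod N))) ` {0..K})
              \<ge> 1 - 1 / real K}"
    using main_bound[OF rd K N] by simp
qed simp

end
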